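(* The space of increasing normalized submodular setfunctions on Borel spaces, endowed with the pseudometric $d(\varphi_1,\varphi_2)=\sum_{k=1}^\infty 2^{-k}d_H^{(k)}(Q_k(\varphi_1),Q_k(\varphi_2))$, is compact.
   Context: A setfunction on a set-algebra $(J,\mathcal{B})$ is a map $\varphi\colon\mathcal{B}\to\mathbb{R}$ with $\varphi(\emptyset)=0$; on a Borel space, $\mathcal{B}$ is the Borel sigma-algebra. It is increasing if $X\subseteq Y$ implies $\varphi(X)\le\varphi(Y)$, submodular if $\varphi(X)+\varphi(Y)\ge\varphi(X\cap Y)+\varphi(X\cup Y)$, and normalized means taking values in $[0,1]$. For $k\in\mathbb{N}$ and a map $F\colon J\to[k]$ with $F^{-1}(i)\in\mathcal{B}$, the quotient $\varphi\circ F^{-1}$ is $A\mapsto\varphi(F^{-1}(A))$ on $2^{[k]}$; $Q_k(\varphi)\subseteq\mathbb{R}^{2^k}$ is the set of all such quotients. $d_H^{(k)}$ is the Hausdorff distance on subsets of Euclidean $\mathbb{R}^{2^k}$. *)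

theory Defs
  imports "HOL-Analysis.Analysis"
begin

definition standard_borel :: "'a measure \<Rightarrow> bool" where
  "standard_borel M \<longleftrightarrow>
     (\<exists>X. completely_metrizable_space X \<and> separable_space X \<and>
          topspace X = space M \<and> sets M = sigma_sets (topspace X) (Collect (openin X)))"

definition inc_norm_submod :: "'a measure \<Rightarrow> ('a set \<Rightarrow> real) \<Rightarrow> bool" where
  "inc_norm_submod M \<phi> \<longleftrightarrow>
     \<phi> {} = 0 \<and>
     (\<forall>X\<in>sets M. 0 \<le> \<phi> X \<and> \<phi> X \<le> 1) \<and>
     (\<forall>X\<in>sets M. \<forall>Y\<in>sets M. X \<subseteq> Y \<longrightarrow> \<phi> X \<le> \<phi> Y) \<and>
     (\<forall>X\<in>sets M. \<forall>Y\<in>sets M. \<phi> X + \<phi> Y \<ge> \<phi> (X \<inter> Y) + \<phi> (X \<union> Y))"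

text \<open>Points of R^(2^k) are represented as functions on the subsets of [k] = {1..k}
  (values outside Pow {1..k} are irrelevant; quotients are set to 0 there).\<close>
definition quotient_sf :: "nat \<Rightarrow> 'a measure \<Rightarrow> ('a set \<Rightarrow> real) \<Rightarrow> ('a \<Rightarrow> nat) \<Rightarrow> (nat set \<Rightarrow> real)" where
  "quotient_sf k M \<phi> F = (\<lambda>A. if A \<subseteq> {1..k} then \<phi> (F -` A \<inter> space M) else 0)"

definition Qk :: "nat \<Rightarrow> 'a measure \<Rightarrow> ('a set \<Rightarrow> real) \<Rightarrow> (nat set \<Rightarrow> real) set" where
  "Qk k M \<phi> = {quotient_sf k M \<phi> F | F.
       F \<in> space M \<rightarrow> {1..k} \<and> (\<forall>i\<in>{1..k}. F -` {i} \<inter> space M \<in> sets M)}"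

definition dist_k :: "nat \<Rightarrow> (nat set \<Rightarrow> real) \<Rightarrow> (nat set \<Rightarrow> real) \<Rightarrow> real" where
  "dist_k k f g = sqrt (\<Sum>A\<in>Pow {1..k}. (f A - g A)\<^sup>2)"

definition hausdist_k :: "nat \<Rightarrow> (nat set \<Rightarrow> real) set \<Rightarrow> (nat set \<Rightarrow> real) set \<Rightarrow> real" where
  "hausdist_k k S T = max (SUP x\<in>S. INF y\<in>T. dist_k k x y) (SUP y\<in>T. INF x\<in>S. dist_k k x y)"

definition sf_dist :: "'a measure \<Rightarrow> ('a set \<Rightarrow> real) \<Rightarrow> 'b measure \<Rightarrow> ('b set \<Rightarrow> real) \<Rightarrow> real" where
  "sf_dist M1 \<phi>1 M2 \<phi>2 =
     (\<Sum>k. (1/2) ^ (Suc k) * hausdist_k (Suc k) (Qk (Suc k) M1 \<phi>1) (Qk (Suc k) M2 \<phi>2))"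

end

theory Submission
  imports Defs
begin


lemma ex_free_ultra:
  "\<exists>U::nat filter. U \<noteq> bot \<and> U \<le> sequentially \<and> (\<forall>P. eventually P U \<or> eventually (\<lambda>x. \<not> P x) U)"
proof -
  define R where "R = {(b, a). a \<noteq> bot \<and> a \<le> b \<and> b \<le> (sequentially::nat filter)}"
  have FR: "Field R = {G. G \<noteq> bot \<and> G \<le> sequentially}"
    unfolding R_def Field_def by (auto simp: bot_unique)
  have "\<exists>m\<in>Field R. \<forall>a\<in>Field R. (m, a) \<in> R \<longrightarrow> a = m"
  proof (rule Zorns_po_lemma)
    show "Partial_order R"
      unfolding R_def
      by (auto simp: partial_order_on_def preorder_on_def antisym_def refl_on_def trans_def Field_def bot_unique)
    fix C assume C: "C \<in> Chains R"
    show "\<exists>u\<in>Field R. \<forall>a\<in>C. (a, u) \<in> R"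
    proof (cases "C = {}")
      case True show ?thesis by (rule bexI[of _ sequentially]) (use True in \<open>auto simp: FR\<close>)
    next
      case False
      have CR: "a \<in> C \<Longrightarrow> a \<noteq> bot \<and> a \<le> sequentially" for a
        using C by (auto simp: Chains_def R_def)
      have dir: "\<exists>x\<in>C. x \<le> inf F G" if "F \<in> C" "G \<in> C" for F G
      proof -
        from C that have "(F, G) \<in> R \<or> (G, F) \<in> R \<or> F = G" by (auto simp: Chains_def)
        then show ?thesis using that by (auto simp: R_def inf_absorb1 inf_absorb2)
      qed
      have ne: "Inf C \<noteq> bot"
      proof
        assume "Inf C = bot"
        then have "eventually (\<lambda>_. False) (Inf C)" by simp
        then obtain b where "b \<in> C" "eventually (\<lambda>_. False) b"
          using eventually_Inf_base[OF False dir] by blast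
        then show False using CR by (auto simp: trivial_limit_def[symmetric])
      qed
      from False obtain x where "x \<in> C" by auto
      then have le: "Inf C \<le> sequentially" using CR by (meson Inf_lower order_trans)
      show ?thesis
      proof (rule bexI[of _ "Inf C"])
        show "Inf C \<in> Field R" using ne le FR by simp
        show "\<forall>a\<in>C. (a, Inf C) \<in> R" using ne CR by (auto simp: R_def Inf_lower)
      qed
    qed
  qed
  then obtain U where U: "U \<noteq> bot" "U \<le> sequentially"
    and max: "\<And>a. a \<noteq> bot \<Longrightarrow> a \<le> U \<Longrightarrow> a = U"
    unfolding FR by (auto simp: R_def)
  have "eventually P U \<or> eventually (\<lambda>x. \<not> P x) U" for P
  proof (rule disjCI)
    assume "\<not> eventually (\<lambda>x. \<not> P x) U"
    then have "inf U (principal {x. P x}) \<noteq> bot"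
      by (simp add: trivial_limit_def eventually_inf_principal not_eventually)
    then have eq: "inf U (principal {x. P x}) = U" by (rule max) simp
    have "eventually P (inf U (principal {x. P x}))" by (simp add: eventually_inf_principal)
    then show "eventually P U" by (simp only: eq)
  qed
  then show ?thesis using U by blast
qed

lemma ultra_lim_ex:
  fixes a :: "nat \<Rightarrow> real" and U :: "nat filter"
  assumes Ub: "U \<noteq> bot" and Uu: "\<And>P. eventually P U \<or> eventually (\<lambda>x. \<not> P x) U"
    and a0: "\<And>n. 0 \<le> a n" and a1: "\<And>n. a n \<le> 1"
  shows "\<exists>L. (a \<longlongrightarrow> L) U"
proof -
  define X where "X = {t. eventually (\<lambda>n. a n \<le> t) U}"
  have ne: "1 \<in> X" unfolding X_def using a1 by simp
  have lb: "0 \<le> t" if "t \<in> X" for t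
  proof -
    from that have "eventually (\<lambda>n. a n \<le> t) U" by (simp add: X_def)
    then obtain n where "a n \<le> t" using eventually_happens'[OF Ub] by blast
    then show ?thesis using a0[of n] by linarith
  qed
  have bdd: "bdd_below X" unfolding bdd_below_def using lb by blast
  show ?thesis
  proof (intro exI order_tendstoI)
    fix y assume y: "y < Inf X"
    show "eventually (\<lambda>n. y < a n) U"
    proof (rule ccontr)
      assume "\<not> eventually (\<lambda>n. y < a n) U"
      then have "eventually (\<lambda>n. \<not> y < a n) U" using Uu by blast
      then have "y \<in> X" unfolding X_def by (auto elim: eventually_mono)
      then have "Inf X \<le> y" using bdd by (rule cInf_lower)
      then show False using y by simp
    qed
  next
    fix y assume y: "Inf X < y"
    then obtain t where "t \<in> X" "t < y" using cInf_less_iff[of X y] ne bdd by blast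
    then show "eventually (\<lambda>n. a n < y) U" unfolding X_def by (auto elim: eventually_mono)
  qed
qed

definition valid :: "nat \<Rightarrow> 'a measure \<Rightarrow> ('a \<Rightarrow> nat) \<Rightarrow> bool" where
  "valid k M F \<longleftrightarrow> F \<in> space M \<rightarrow> {1..k} \<and> (\<forall>i\<in>{1..k}. F -` {i} \<inter> space M \<in> sets M)"

lemma Qk_eq: "Qk k M \<phi> = quotient_sf k M \<phi> ` {F. valid k M F}"
  unfolding Qk_def valid_def by auto

lemma valid_pre:
  assumes "valid k M F" "A \<subseteq> {1..k}"
  shows "F -` A \<inter> space M \<in> sets M"
proof -
  have eq: "F -` A \<inter> space M = (\<Union>i\<in>A. F -` {i} \<inter> space M)" by auto
  have "finite A" using assms(2) finite_subset by blast
  then show ?thesis unfolding eq using assms unfolding valid_def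
    by (intro sets.finite_UN) auto
qed

lemma valid_const: "1 \<le> k \<Longrightarrow> valid k M (\<lambda>_. 1)"
  unfolding valid_def by auto

lemma quot_bounds:
  assumes "inc_norm_submod M \<phi>" "valid k M F"
  shows "0 \<le> quotient_sf k M \<phi> F A \<and> quotient_sf k M \<phi> F A \<le> 1"
  using assms valid_pre[OF assms(2)] unfolding quotient_sf_def inc_norm_submod_def by auto

definition cell :: "nat \<Rightarrow> nat \<Rightarrow> (nat set \<Rightarrow> real) \<Rightarrow> (nat set \<Rightarrow> int)" where
  "cell k m q = (\<lambda>A\<in>Pow {1..k}. \<lfloor>real m * q A\<rfloor>)"

definition cellset :: "nat \<Rightarrow> nat \<Rightarrow> (nat set \<Rightarrow> int) set" where
  "cellset k m = PiE (Pow {1..k}) (\<lambda>_. {0..int m})"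

lemma finite_cellset: "finite (cellset k m)"
  unfolding cellset_def by (intro finite_PiE) auto

lemma cell_in:
  assumes "\<And>A. A \<subseteq> {1..k} \<Longrightarrow> 0 \<le> q A \<and> q A \<le> 1"
  shows "cell k m q \<in> cellset k m"
proof -
  have "\<lfloor>real m * q A\<rfloor> \<in> {0..int m}" if "A \<subseteq> {1..k}" for A
  proof -
    have "0 \<le> real m * q A" "real m * q A \<le> real m"
      using assms[OF that] by (auto simp: mult_left_le)
    then show ?thesis by (auto simp: floor_le_iff le_floor_iff)
  qed
  then show ?thesis unfolding cell_def cellset_def by auto
qed

lemma cell_close:
  assumes "0 < m" "cell k m q = cell k m q'" "A \<subseteq> {1..k}"
  shows "\<bar>q A - q' A\<bar> < 1 / real m"
proof -
  have "\<lfloor>real m * q A\<rfloor> = \<lfloor>real m * q' A\<rfloor>"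
    using fun_cong[OF assms(2), of A] assms(3) by (simp add: cell_def)
  then have "\<bar>real m * q A - real m * q' A\<bar> < 1"
    by (smt (verit, best) floor_eq_iff of_int_floor_le)
  then have "real m * \<bar>q A - q' A\<bar> < 1"
    by (simp add: abs_mult right_diff_distrib[symmetric])
  then show ?thesis using assms(1) by (simp add: field_simps)
qed

lemma dist_k_sym: "dist_k k f g = dist_k k g f"
  unfolding dist_k_def by (simp add: power2_commute)

lemma dist_k_nonneg: "0 \<le> dist_k k f g"
  unfolding dist_k_def by (simp add: sum_nonneg)

lemma bddT: "bdd_below ((\<lambda>y. dist_k k x y) ` T)"
  by (rule bdd_belowI2[of _ 0]) (simp add: dist_k_nonneg)

lemma bddS: "bdd_below ((\<lambda>x. dist_k k x y) ` S)"
  by (rule bdd_belowI2[of _ 0]) (simp add: dist_k_nonneg)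

lemma dist_k_le:
  assumes "\<And>A. A \<subseteq> {1..k} \<Longrightarrow> \<bar>f A - g A\<bar> \<le> e"
  shows "dist_k k f g \<le> 2^k * e"
proof -
  have "dist_k k f g = L2_set (\<lambda>A. f A - g A) (Pow {1..k})"
    unfolding dist_k_def L2_set_def by simp
  also have "\<dots> \<le> (\<Sum>A\<in>Pow {1..k}. \<bar>f A - g A\<bar>)" by (rule L2_set_le_sum_abs)
  also have "\<dots> \<le> (\<Sum>A\<in>Pow {1..k}. e)" by (rule sum_mono) (use assms in auto)
  also have "\<dots> = 2^k * e" by (simp add: card_Pow)
  finally show ?thesis .
qed

lemma dist_k_bound:
  assumes "\<And>A. A \<subseteq> {1..k} \<Longrightarrow> 0 \<le> f A \<and> f A \<le> 1 \<and> 0 \<le> g A \<and> g A \<le> 1"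
  shows "dist_k k f g \<le> (3/2)^k"
proof -
  have "(\<Sum>A\<in>Pow {1..k}. (f A - g A)\<^sup>2) \<le> (\<Sum>A\<in>Pow {1..k}. 1)"
  proof (rule sum_mono)
    fix A assume "A \<in> Pow {1..k}"
    then have "\<bar>f A - g A\<bar> \<le> 1" using assms[of A] by auto
    then show "(f A - g A)\<^sup>2 \<le> 1"
      by (metis abs_ge_zero power2_abs power_le_one)
  qed
  also have "\<dots> = 2^k" by (simp add: card_Pow)
  also have "\<dots> \<le> ((3/2)^k)\<^sup>2"
  proof -
    have "(2::real)^k \<le> (9/4)^k" by (rule power_mono) auto
    also have "(9/4::real) = 3/2 * (3/2)" by simp
    also have "(3/2 * (3/2::real))^k = (3/2)^k * (3/2)^k" by (rule power_mult_distrib)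
    also have "\<dots> = ((3/2)^k)\<^sup>2" by (rule power2_eq_square[symmetric])
    finally show ?thesis .
  qed
  finally have "sqrt (\<Sum>A\<in>Pow {1..k}. (f A - g A)\<^sup>2) \<le> sqrt (((3/2)^k)\<^sup>2)"
    by (rule real_sqrt_le_mono)
  then show ?thesis unfolding dist_k_def by simp
qed

lemma haus_le:
  assumes "S \<noteq> {}" "T \<noteq> {}"
    and "\<forall>x\<in>S. \<exists>y\<in>T. dist_k k x y \<le> e" and "\<forall>y\<in>T. \<exists>x\<in>S. dist_k k x y \<le> e"
  shows "hausdist_k k S T \<le> e"
proof -
  have "(SUP x\<in>S. INF y\<in>T. dist_k k x y) \<le> e"
  proof (rule cSUP_least[OF assms(1)])
    fix x assume "x \<in> S"
    then obtain y where "y \<in> T" "dist_k k x y \<le> e" using assms(3) by blast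
    then show "(INF y\<in>T. dist_k k x y) \<le> e"
      by (rule cINF_lower2[OF bddT])
  qed
  moreover have "(SUP y\<in>T. INF x\<in>S. dist_k k x y) \<le> e"
  proof (rule cSUP_least[OF assms(2)])
    fix y assume "y \<in> T"
    then obtain x where "x \<in> S" "dist_k k x y \<le> e" using assms(4) by blast
    then show "(INF x\<in>S. dist_k k x y) \<le> e"
      by (rule cINF_lower2[OF bddS])
  qed
  ultimately show ?thesis unfolding hausdist_k_def by simp
qed

lemma haus_nonneg:
  assumes "S \<noteq> {}" "T \<noteq> {}" and "\<forall>x\<in>S. \<exists>y\<in>T. dist_k k x y \<le> e"
  shows "0 \<le> hausdist_k k S T"
proof -
  obtain x0 where x0: "x0 \<in> S" using assms(1) by blast
  have i0: "0 \<le> (INF y\<in>T. dist_k k x y)" for x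
    by (rule cINF_greatest[OF assms(2)]) (simp add: dist_k_nonneg)
  have bdd: "bdd_above ((\<lambda>x. INF y\<in>T. dist_k k x y) ` S)"
  proof (rule bdd_aboveI2)
    fix x assume "x \<in> S"
    then obtain y where "y \<in> T" "dist_k k x y \<le> e" using assms(3) by blast
    then show "(INF y\<in>T. dist_k k x y) \<le> e"
      by (rule cINF_lower2[OF bddT])
  qed
  have "0 \<le> (SUP x\<in>S. INF y\<in>T. dist_k k x y)"
    using i0[of x0] cSUP_upper[OF x0 bdd] by linarith
  then show ?thesis unfolding hausdist_k_def by simp
qed

lemma tend_dist:
  assumes "\<And>A. ((\<lambda>n. f n A) \<longlongrightarrow> g A) F" "0 < e"
  shows "eventually (\<lambda>n. dist_k k (f n) g \<le> e) F"
proof -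
  have "\<forall>A\<in>Pow {1..k}. eventually (\<lambda>n. \<bar>f n A - g A\<bar> < e / 2^k) F"
    using assms(1) assms(2) unfolding tendsto_iff dist_real_def by auto
  then have "eventually (\<lambda>n. \<forall>A\<in>Pow {1..k}. \<bar>f n A - g A\<bar> < e / 2^k) F"
    by (intro eventually_ball_finite) auto
  then show ?thesis
  proof (rule eventually_mono)
    fix n assume "\<forall>A\<in>Pow {1..k}. \<bar>f n A - g A\<bar> < e / 2^k"
    then have "dist_k k (f n) g \<le> 2^k * (e / 2^k)"
      by (intro dist_k_le) (auto intro: less_imp_le)
    then show "dist_k k (f n) g \<le> e" by simp
  qed
qed



definition Tset :: "(nat \<times> nat \<times> (nat set \<Rightarrow> int)) set" where
  "Tset = {(k, m, c). 1 \<le> k \<and> 1 \<le> m \<and> c \<in> cellset k m}"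

lemma countable_Tset: "countable Tset"
proof -
  have "Tset \<subseteq> (\<Union>k. \<Union>m. (\<lambda>c. (k, m, c)) ` cellset k m)" unfolding Tset_def by auto
  moreover have "countable (\<Union>k. \<Union>m. (\<lambda>c. (k, m, c)) ` cellset k m)"
  proof -
    have c: "countable ((\<lambda>c. (k, m, c)) ` cellset k m)" for k m
      by (simp add: countable_finite finite_cellset)
    have "countable (\<Union>m. (\<lambda>c. (k, m, c)) ` cellset k m)" for k
      by (rule countable_UN[OF countableI_type c])
    then show ?thesis by (rule countable_UN[OF countableI_type])
  qed
  ultimately show ?thesis by (rule countable_subset)
qed

lemma Tset_ne: "Tset \<noteq> {}"
proof -
  have "cell 1 1 (\<lambda>_. 0) \<in> cellset 1 1" by (rule cell_in) auto
  then have "(1, 1, cell 1 1 (\<lambda>_. 0)) \<in> Tset" unfolding Tset_def by auto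
  then show ?thesis by auto
qed

definition tst :: "nat \<Rightarrow> nat \<times> nat \<times> (nat set \<Rightarrow> int)" where
  "tst i = from_nat_into Tset i"
definition tk :: "nat \<Rightarrow> nat" where "tk i = fst (tst i)"
definition tm :: "nat \<Rightarrow> nat" where "tm i = fst (snd (tst i))"
definition tc :: "nat \<Rightarrow> nat set \<Rightarrow> int" where "tc i = snd (snd (tst i))"

lemma tk_ge: "1 \<le> tk i"
  using from_nat_into[OF Tset_ne, of i] unfolding tk_def tst_def Tset_def by auto

lemma tst_surj:
  assumes "1 \<le> k" "1 \<le> m" "c \<in> cellset k m"
  shows "\<exists>i. tk i = k \<and> tm i = m \<and> tc i = c"
proof -
  have "(k, m, c) \<in> Tset" using assms unfolding Tset_def by auto
  then obtain i where "from_nat_into Tset i = (k, m, c)"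
    using from_nat_into_surj[OF countable_Tset] by blast
  then show ?thesis unfolding tk_def tm_def tc_def tst_def by (intro exI[of _ i]) simp
qed

definition dec :: "real \<Rightarrow> nat list" where "dec y = from_nat (nat \<lfloor>y\<rfloor>)"

definition Sr :: "real set" where "Sr = range (\<lambda>j::nat. real j)"
definition Nr :: "real measure" where "Nr = count_space Sr"

definition pii :: "nat \<Rightarrow> real \<Rightarrow> nat" where
  "pii i y = (if i < length (dec y) \<and> dec y ! i \<in> {1..tk i} then dec y ! i else 1)"

lemma space_Nr: "space Nr = Sr" and sets_Nr: "sets Nr = Pow Sr"
  unfolding Nr_def by auto

lemma Nr_sb: "standard_borel Nr"
  unfolding standard_borel_def
proof (intro exI[of _ "discrete_topology Sr"] conjI)
  show "completely_metrizable_space (discrete_topology Sr)"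
    by (rule completely_metrizable_space_discrete_topology)
  show "separable_space (discrete_topology Sr)"
    unfolding separable_space_discrete_topology Sr_def by simp
  show "topspace (discrete_topology Sr) = space Nr" by (simp add: space_Nr)
  have "Collect (openin (discrete_topology Sr)) = Pow Sr" by auto
  then show "sets Nr = sigma_sets (topspace (discrete_topology Sr)) (Collect (openin (discrete_topology Sr)))"
    by (simp add: sets_Nr sigma_algebra.sigma_sets_eq[OF sigma_algebra_Pow])
qed

lemma pii_valid: "valid (tk i) Nr (pii i)"
  unfolding valid_def using tk_ge[of i] by (auto simp: space_Nr sets_Nr pii_def)

lemma map_upt_eq: "length l = n \<Longrightarrow> (map f [0..<n] = l) \<longleftrightarrow> (\<forall>i<n. f i = l ! i)"
  by (auto simp: list_eq_iff_nth_eq)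

locale cpt =
  fixes M :: "nat \<Rightarrow> 'a measure" and \<phi> :: "nat \<Rightarrow> 'a set \<Rightarrow> real" and U :: "nat filter"
  assumes inc: "\<And>n. inc_norm_submod (M n) (\<phi> n)"
    and Ub: "U \<noteq> bot" and Us: "U \<le> sequentially"
    and Uu: "\<And>P. eventually P U \<or> eventually (\<lambda>x. \<not> P x) U"
begin

abbreviation "qt k n F \<equiv> quotient_sf k (M n) (\<phi> n) F"

definition Ft :: "nat \<Rightarrow> nat \<Rightarrow> 'a \<Rightarrow> nat" where
  "Ft i n = (if \<exists>F. valid (tk i) (M n) F \<and> cell (tk i) (tm i) (qt (tk i) n F) = tc i
             then SOME F. valid (tk i) (M n) F \<and> cell (tk i) (tm i) (qt (tk i) n F) = tc i
             else (\<lambda>_. 1))"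

lemma Ft_valid: "valid (tk i) (M n) (Ft i n)"
proof (cases "\<exists>F. valid (tk i) (M n) F \<and> cell (tk i) (tm i) (qt (tk i) n F) = tc i")
  case True
  then show ?thesis unfolding Ft_def using someI_ex[OF True] by simp
next
  case False
  show ?thesis by (simp only: Ft_def if_not_P[OF False]) (rule valid_const[OF tk_ge])
qed

lemma Ft_cell:
  assumes "\<exists>F. valid (tk i) (M n) F \<and> cell (tk i) (tm i) (qt (tk i) n F) = tc i"
  shows "cell (tk i) (tm i) (qt (tk i) n (Ft i n)) = tc i"
  unfolding Ft_def using someI_ex[OF assms] assms by simp

definition hl :: "nat \<Rightarrow> 'a \<Rightarrow> nat list" where "hl n x = map (\<lambda>i. Ft i n x) [0..<n]"
definition g :: "nat \<Rightarrow> 'a \<Rightarrow> real" where "g n x = real (to_nat (hl n x))"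
definition psi :: "real set \<Rightarrow> real" where
  "psi X = Lim U (\<lambda>n. \<phi> n (g n -` X \<inter> space (M n)))"

lemma dec_g: "dec (g n x) = hl n x"
  by (simp add: dec_def g_def)

lemma g_S: "g n x \<in> Sr"
  unfolding g_def Sr_def by auto

lemma hl_meas: "hl n \<in> measurable (M n) (count_space UNIV)"
  unfolding measurable_count_space_eq2_countable
proof (intro conjI ballI)
  show "hl n \<in> space (M n) \<rightarrow> UNIV" by simp
  fix l :: "nat list"
  show "hl n -` {l} \<inter> space (M n) \<in> sets (M n)"
  proof (cases "length l = n")
    case False
    then have "hl n -` {l} \<inter> space (M n) = {}" by (auto simp: hl_def)
    then show ?thesis by simp
  next
    case True
    have eq: "hl n -` {l} \<inter> space (M n) = {x\<in>space (M n). \<forall>i\<in>{..<n}. Ft i n x = l ! i}"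
    proof -
      have "x \<in> hl n -` {l} \<longleftrightarrow> (\<forall>i\<in>{..<n}. Ft i n x = l ! i)" for x
        unfolding vimage_singleton_eq hl_def map_upt_eq[OF True] by blast
      then show ?thesis by blast
    qed
    have "{x\<in>space (M n). Ft i n x = l ! i} \<in> sets (M n)" for i
    proof (cases "l ! i \<in> {1..tk i}")
      case True
      have "{x\<in>space (M n). Ft i n x = l ! i} = Ft i n -` {l ! i} \<inter> space (M n)" by blast
      moreover have "Ft i n -` {l ! i} \<inter> space (M n) \<in> sets (M n)"
        using Ft_valid[of i n] True unfolding valid_def by blast
      ultimately show ?thesis by simp
    next
      case False
      have "Ft i n \<in> space (M n) \<rightarrow> {1..tk i}" using Ft_valid[of i n] unfolding valid_def by blast
      then have "\<forall>x\<in>space (M n). Ft i n x \<noteq> l ! i" using False funcset_mem by metis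
      then have e: "{x\<in>space (M n). Ft i n x = l ! i} = {}" by auto
      show ?thesis unfolding e by (rule sets.empty_sets)
    qed
    then show ?thesis unfolding eq by (intro sets.sets_Collect_finite_All) auto
  qed
qed

lemma g_pre: "g n -` X \<inter> space (M n) \<in> sets (M n)"
proof -
  have "g n -` X \<inter> space (M n) = hl n -` {l. real (to_nat l) \<in> X} \<inter> space (M n)"
    by (auto simp: g_def)
  also have "\<dots> \<in> sets (M n)" by (rule measurable_sets[OF hl_meas]) simp
  finally show ?thesis .
qed

lemma phi_b: "X \<in> sets (M n) \<Longrightarrow> 0 \<le> \<phi> n X \<and> \<phi> n X \<le> 1"
  using inc[of n] unfolding inc_norm_submod_def by auto

lemma phi_mono: "A \<in> sets (M n) \<Longrightarrow> B \<in> sets (M n) \<Longrightarrow> A \<subseteq> B \<Longrightarrow> \<phi> n A \<le> \<phi> n B"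
  using inc[of n] unfolding inc_norm_submod_def by blast

lemma phi_sub: "A \<in> sets (M n) \<Longrightarrow> B \<in> sets (M n) \<Longrightarrow> \<phi> n (A \<inter> B) + \<phi> n (A \<union> B) \<le> \<phi> n A + \<phi> n B"
  using inc[of n] unfolding inc_norm_submod_def by blast

lemma psi_tend: "((\<lambda>n. \<phi> n (g n -` X \<inter> space (M n))) \<longlongrightarrow> psi X) U"
proof -
  have b1: "\<And>n. 0 \<le> \<phi> n (g n -` X \<inter> space (M n))" using phi_b[OF g_pre] by blast
  have b2: "\<And>n. \<phi> n (g n -` X \<inter> space (M n)) \<le> 1" using phi_b[OF g_pre] by blast
  obtain L where L: "((\<lambda>n. \<phi> n (g n -` X \<inter> space (M n))) \<longlongrightarrow> L) U"
    using ultra_lim_ex[where a="\<lambda>n. \<phi> n (g n -` X \<inter> space (M n))", OF Ub Uu b1 b2] by blast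
  have "psi X = L" unfolding psi_def by (rule tendsto_Lim[OF _ L]) (use Ub in simp)
  then show ?thesis using L by simp
qed

lemma psi_inc: "inc_norm_submod Nr psi"
  unfolding inc_norm_submod_def
proof (intro conjI ballI impI)
  have "((\<lambda>n. \<phi> n (g n -` {} \<inter> space (M n))) \<longlongrightarrow> 0) U"
    using inc unfolding inc_norm_submod_def by simp
  then show "psi {} = 0" using tendsto_unique[OF _ psi_tend] Ub by auto
next
  fix X assume "X \<in> sets Nr"
  show "0 \<le> psi X"
    by (rule tendsto_lowerbound[OF psi_tend]) (use Ub phi_b[OF g_pre] in auto)
  show "psi X \<le> 1"
    by (rule tendsto_upperbound[OF psi_tend]) (use Ub phi_b[OF g_pre] in auto)
next
  fix X Y assume XY: "X \<in> sets Nr" "Y \<in> sets Nr" "X \<subseteq> Y"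
  show "psi X \<le> psi Y"
  proof (rule tendsto_le[OF _ psi_tend psi_tend])
    show "\<not> trivial_limit U" using Ub by simp
    show "eventually (\<lambda>n. \<phi> n (g n -` X \<inter> space (M n)) \<le> \<phi> n (g n -` Y \<inter> space (M n))) U"
    proof (intro always_eventually allI)
      fix n
      have "g n -` X \<inter> space (M n) \<subseteq> g n -` Y \<inter> space (M n)" using XY(3) by blast
      then show "\<phi> n (g n -` X \<inter> space (M n)) \<le> \<phi> n (g n -` Y \<inter> space (M n))"
        by (rule phi_mono[OF g_pre g_pre])
    qed
  qed
next
  fix X Y assume XY: "X \<in> sets Nr" "Y \<in> sets Nr"
  show "psi (X \<inter> Y) + psi (X \<union> Y) \<le> psi X + psi Y"
  proof (rule tendsto_le[OF _ tendsto_add[OF psi_tend psi_tend] tendsto_add[OF psi_tend psi_tend]])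
    show "\<not> trivial_limit U" using Ub by simp
    have "\<phi> n (g n -` (X \<inter> Y) \<inter> space (M n)) + \<phi> n (g n -` (X \<union> Y) \<inter> space (M n))
          \<le> \<phi> n (g n -` X \<inter> space (M n)) + \<phi> n (g n -` Y \<inter> space (M n))" for n
    proof -
      have e1: "g n -` (X \<inter> Y) \<inter> space (M n) = (g n -` X \<inter> space (M n)) \<inter> (g n -` Y \<inter> space (M n))" by auto
      have e2: "g n -` (X \<union> Y) \<inter> space (M n) = (g n -` X \<inter> space (M n)) \<union> (g n -` Y \<inter> space (M n))" by auto
      show ?thesis unfolding e1 e2 by (rule phi_sub[OF g_pre g_pre])
    qed
    then show "eventually (\<lambda>n. \<phi> n (g n -` (X \<inter> Y) \<inter> space (M n)) + \<phi> n (g n -` (X \<union> Y) \<inter> space (M n))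
          \<le> \<phi> n (g n -` X \<inter> space (M n)) + \<phi> n (g n -` Y \<inter> space (M n))) U"
      by (intro always_eventually allI)
  qed
qed

lemma comp_valid: "valid k Nr G \<Longrightarrow> valid k (M n) (\<lambda>x. G (g n x))"
proof -
  assume G: "valid k Nr G"
  have eq: "(\<lambda>x. G (g n x)) -` {i} \<inter> space (M n) = g n -` (G -` {i} \<inter> Sr) \<inter> space (M n)" for i
    using g_S by auto
  show ?thesis unfolding valid_def
  proof (intro conjI ballI)
    show "(\<lambda>x. G (g n x)) \<in> space (M n) \<rightarrow> {1..k}"
      using G g_S unfolding valid_def space_Nr by auto
    fix i show "(\<lambda>x. G (g n x)) -` {i} \<inter> space (M n) \<in> sets (M n)"
      unfolding eq by (rule g_pre)
  qed
qed

lemma comp_tend: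
  assumes "valid k Nr G"
  shows "((\<lambda>n. qt k n (\<lambda>x. G (g n x)) A) \<longlongrightarrow> quotient_sf k Nr psi G A) U"
proof (cases "A \<subseteq> {1..k}")
  case True
  have eq: "(\<lambda>x. G (g n x)) -` A \<inter> space (M n) = g n -` (G -` A \<inter> Sr) \<inter> space (M n)" for n
    using g_S by auto
  have e1: "qt k n (\<lambda>x. G (g n x)) A = \<phi> n (g n -` (G -` A \<inter> Sr) \<inter> space (M n))" for n
    unfolding quotient_sf_def if_P[OF True] eq ..
  have e2: "quotient_sf k Nr psi G A = psi (G -` A \<inter> Sr)"
    unfolding quotient_sf_def if_P[OF True] space_Nr ..
  show ?thesis unfolding e1 e2 by (rule psi_tend)
next
  case False
  then show ?thesis by (simp add: quotient_sf_def)
qed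

lemma pii_g:
  assumes "i < n" "x \<in> space (M n)"
  shows "pii i (g n x) = Ft i n x"
proof -
  have len: "length (hl n x) = n" by (simp add: hl_def)
  have nth: "hl n x ! i = Ft i n x" using assms(1) by (simp add: hl_def)
  have "Ft i n x \<in> {1..tk i}" using Ft_valid[of i n] assms(2) unfolding valid_def by blast
  then show ?thesis unfolding pii_def dec_g len nth using assms(1) by simp
qed

lemma test_tend:
  "((\<lambda>n. qt (tk i) n (Ft i n) A) \<longlongrightarrow> quotient_sf (tk i) Nr psi (pii i) A) U"
proof -
  have ev: "eventually (\<lambda>n. i < n) U"
    using filter_leD[OF Us eventually_gt_at_top[of i]] .
  have ev2: "eventually (\<lambda>n. qt (tk i) n (\<lambda>x. pii i (g n x)) A = qt (tk i) n (Ft i n) A) U"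
  proof (rule eventually_mono[OF ev])
    fix n assume n: "i < n"
    have "(\<lambda>x. pii i (g n x)) -` B \<inter> space (M n) = Ft i n -` B \<inter> space (M n)" for B
    proof (intro set_eqI iffI)
      fix x assume "x \<in> (\<lambda>x. pii i (g n x)) -` B \<inter> space (M n)"
      then show "x \<in> Ft i n -` B \<inter> space (M n)" using pii_g[OF n, of x] by simp
    next
      fix x assume "x \<in> Ft i n -` B \<inter> space (M n)"
      then show "x \<in> (\<lambda>x. pii i (g n x)) -` B \<inter> space (M n)" using pii_g[OF n, of x] by simp
    qed
    then show "qt (tk i) n (\<lambda>x. pii i (g n x)) A = qt (tk i) n (Ft i n) A"
      unfolding quotient_sf_def by presburger
  qed
  have "((\<lambda>n. qt (tk i) n (\<lambda>x. pii i (g n x)) A) \<longlongrightarrow> quotient_sf (tk i) Nr psi (pii i) A) U"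
    by (rule comp_tend[OF pii_valid])
  then show ?thesis by (rule tendsto_cong[OF ev2, THEN iffD1])
qed

end



lemma dist_k_L2: "dist_k k f g = L2_set (\<lambda>A. f A - g A) (Pow {1..k})"
  unfolding dist_k_def L2_set_def by simp

lemma dist_k_tri: "dist_k k f h \<le> dist_k k f g + dist_k k g h"
proof -
  have "dist_k k f h = L2_set (\<lambda>A. (f A - g A) + (g A - h A)) (Pow {1..k})"
    unfolding dist_k_L2 by simp
  also have "\<dots> \<le> L2_set (\<lambda>A. f A - g A) (Pow {1..k}) + L2_set (\<lambda>A. g A - h A) (Pow {1..k})"
    by (rule L2_set_triangle_ineq)
  finally show ?thesis unfolding dist_k_L2 .
qed

lemma haus_bound:
  assumes "S \<noteq> {}" "T \<noteq> {}"
    and "\<And>x A. x \<in> S \<Longrightarrow> A \<subseteq> {1..k} \<Longrightarrow> 0 \<le> x A \<and> x A \<le> 1"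
    and "\<And>x A. x \<in> T \<Longrightarrow> A \<subseteq> {1..k} \<Longrightarrow> 0 \<le> x A \<and> x A \<le> 1"
  shows "0 \<le> hausdist_k k S T \<and> hausdist_k k S T \<le> (3/2)^k"
proof -
  have d: "dist_k k x y \<le> (3/2)^k" if "x \<in> S" "y \<in> T" for x y
    by (rule dist_k_bound) (use assms(3)[OF that(1)] assms(4)[OF that(2)] in blast)
  have a: "\<forall>x\<in>S. \<exists>y\<in>T. dist_k k x y \<le> (3/2)^k" using d assms(2) by blast
  have b: "\<forall>y\<in>T. \<exists>x\<in>S. dist_k k x y \<le> (3/2)^k" using d assms(1) by blast
  show ?thesis using haus_le[OF assms(1,2) a b] haus_nonneg[OF assms(1,2) a] by simp
qed

lemma Qk_ne: "1 \<le> k \<Longrightarrow> Qk k M ph \<noteq> {}"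
  unfolding Qk_eq using valid_const[of k M] by blast

context cpt
begin

lemma Q_bounds: "x \<in> Qk k (M n) (\<phi> n) \<Longrightarrow> 0 \<le> x A \<and> x A \<le> 1"
  unfolding Qk_eq using quot_bounds[OF inc] by blast

lemma QN_bounds: "x \<in> Qk k Nr psi \<Longrightarrow> 0 \<le> x A \<and> x A \<le> 1"
  unfolding Qk_eq using quot_bounds[OF psi_inc] by blast

lemma haus_ev:
  assumes k: "1 \<le> k" and d: "0 < \<delta>"
  shows "eventually (\<lambda>n. hausdist_k k (Qk k (M n) (\<phi> n)) (Qk k Nr psi) \<le> \<delta>) U"
proof -
  obtain m :: nat where m: "2^k * 2 / \<delta> < real m" using reals_Archimedean2 by blast
  have m0: "0 < real m" using m d by (smt (verit) divide_pos_pos zero_less_power)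
  then have m1: "1 \<le> m" by simp
  have mb: "2^k * (1 / real m) \<le> \<delta> / 2"
    using m m0 d by (simp add: field_simps)
  define e where "e = \<delta> / 2"
  have e0: "0 < e" using d by (simp add: e_def)
  define C where "C = cellset k m"
  have "\<forall>c\<in>C. \<exists>i. tk i = k \<and> tm i = m \<and> tc i = c"
    using tst_surj k m1 by (simp add: C_def)
  then obtain ic where ic: "\<And>c. c \<in> C \<Longrightarrow> tk (ic c) = k \<and> tm (ic c) = m \<and> tc (ic c) = c"
    by metis
  define E where "E c = eventually (\<lambda>n. \<exists>F. valid k (M n) F \<and> cell k m (qt k n F) = c) U" for c
  define yN where "yN c = quotient_sf k Nr psi (pii (ic c))" for c
  have evA: "eventually (\<lambda>n. \<forall>c\<in>C. (E c \<longrightarrow> dist_k k (qt k n (Ft (ic c) n)) (yN c) \<le> e)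
       \<and> (\<not> E c \<longrightarrow> \<not> (\<exists>F. valid k (M n) F \<and> cell k m (qt k n F) = c))) U"
  proof (rule eventually_ball_finite)
    show "finite C" unfolding C_def by (rule finite_cellset)
    show "\<forall>c\<in>C. eventually (\<lambda>n. (E c \<longrightarrow> dist_k k (qt k n (Ft (ic c) n)) (yN c) \<le> e)
       \<and> (\<not> E c \<longrightarrow> \<not> (\<exists>F. valid k (M n) F \<and> cell k m (qt k n F) = c))) U"
    proof
      fix c assume c: "c \<in> C"
      show "eventually (\<lambda>n. (E c \<longrightarrow> dist_k k (qt k n (Ft (ic c) n)) (yN c) \<le> e)
       \<and> (\<not> E c \<longrightarrow> \<not> (\<exists>F. valid k (M n) F \<and> cell k m (qt k n F) = c))) U"
      proof (cases "E c")
        case True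
        have tt: "((\<lambda>n. qt k n (Ft (ic c) n) A) \<longlongrightarrow> yN c A) U" for A
          using test_tend[of "ic c" A] ic[OF c] by (simp add: yN_def)
        have "eventually (\<lambda>n. dist_k k (qt k n (Ft (ic c) n)) (yN c) \<le> e) U"
          by (rule tend_dist[OF tt e0])
        then show ?thesis by (rule eventually_mono) (simp add: True)
      next
        case False
        then have "eventually (\<lambda>n. \<not> (\<exists>F. valid k (M n) F \<and> cell k m (qt k n F) = c)) U"
          using Uu unfolding E_def by blast
        then show ?thesis by (rule eventually_mono) (simp add: False)
      qed
    qed
  qed
  define QN where "QN = Qk k Nr psi"
  define C' where "C' = cell k m ` QN"
  have C'C: "C' \<subseteq> C" unfolding C'_def C_def QN_def
    using cell_in QN_bounds by blast
  have fC': "finite C'" using finite_subset[OF C'C] finite_cellset C_def by blast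
  have "\<forall>c\<in>C'. \<exists>G. valid k Nr G \<and> cell k m (quotient_sf k Nr psi G) = c"
    unfolding C'_def QN_def Qk_eq by blast
  then obtain Gc where Gc: "\<And>c. c \<in> C' \<Longrightarrow> valid k Nr (Gc c) \<and> cell k m (quotient_sf k Nr psi (Gc c)) = c"
    by metis
  have evB: "eventually (\<lambda>n. \<forall>c\<in>C'. dist_k k (qt k n (\<lambda>x. Gc c (g n x))) (quotient_sf k Nr psi (Gc c)) \<le> e) U"
  proof (rule eventually_ball_finite[OF fC'])
    show "\<forall>c\<in>C'. eventually (\<lambda>n. dist_k k (qt k n (\<lambda>x. Gc c (g n x))) (quotient_sf k Nr psi (Gc c)) \<le> e) U"
    proof
      fix c assume c: "c \<in> C'"
      show "eventually (\<lambda>n. dist_k k (qt k n (\<lambda>x. Gc c (g n x))) (quotient_sf k Nr psi (Gc c)) \<le> e) U"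
        by (rule tend_dist[OF comp_tend e0]) (use Gc[OF c] in blast)
    qed
  qed
  have close: "dist_k k x y \<le> 2^k * (1 / real m)" if "cell k m x = cell k m y" for x y
  proof (rule dist_k_le)
    fix A assume "A \<subseteq> {1..k}"
    then show "\<bar>x A - y A\<bar> \<le> 1 / real m" using cell_close[OF _ that] m0 by (simp add: less_imp_le)
  qed
  have "eventually (\<lambda>n. hausdist_k k (Qk k (M n) (\<phi> n)) QN \<le> 2^k * (1 / real m) + e) U"
    using eventually_conj[OF evA evB]
  proof (rule eventually_mono)
    fix n
    assume AB: "(\<forall>c\<in>C. (E c \<longrightarrow> dist_k k (qt k n (Ft (ic c) n)) (yN c) \<le> e)
       \<and> (\<not> E c \<longrightarrow> \<not> (\<exists>F. valid k (M n) F \<and> cell k m (qt k n F) = c))) \<and>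
       (\<forall>c\<in>C'. dist_k k (qt k n (\<lambda>x. Gc c (g n x))) (quotient_sf k Nr psi (Gc c)) \<le> e)"
    show "hausdist_k k (Qk k (M n) (\<phi> n)) QN \<le> 2^k * (1 / real m) + e"
    proof (rule haus_le)
      show "Qk k (M n) (\<phi> n) \<noteq> {}" "QN \<noteq> {}" unfolding QN_def using Qk_ne[OF k] by auto
      show "\<forall>x\<in>Qk k (M n) (\<phi> n). \<exists>y\<in>QN. dist_k k x y \<le> 2^k * (1 / real m) + e"
      proof
        fix x assume "x \<in> Qk k (M n) (\<phi> n)"
        then obtain F where F: "valid k (M n) F" "x = qt k n F" unfolding Qk_eq by blast
        define c where "c = cell k m x"
        have cC: "c \<in> C" unfolding c_def C_def by (rule cell_in) (use quot_bounds[OF inc F(1)] F(2) in blast)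
        have ex: "\<exists>F. valid k (M n) F \<and> cell k m (qt k n F) = c" using F c_def by blast
        have Ec: "E c" using AB cC ex by blast
        have d1: "dist_k k (qt k n (Ft (ic c) n)) (yN c) \<le> e" using AB cC Ec by blast
        have cellFt: "cell k m (qt k n (Ft (ic c) n)) = c"
          using Ft_cell[of "ic c" n] ic[OF cC] ex by simp
        have d2: "dist_k k x (qt k n (Ft (ic c) n)) \<le> 2^k * (1 / real m)"
          by (rule close) (unfold cellFt, simp add: c_def)
        have yin: "yN c \<in> QN" unfolding yN_def QN_def Qk_eq
          using pii_valid[of "ic c"] ic[OF cC] by auto
        have "dist_k k x (yN c) \<le> 2^k * (1 / real m) + e"
          using dist_k_tri[of k x "yN c" "qt k n (Ft (ic c) n)"] d1 d2 by linarith
        then show "\<exists>y\<in>QN. dist_k k x y \<le> 2^k * (1 / real m) + e" using yin by blast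
      qed
      show "\<forall>y\<in>QN. \<exists>x\<in>Qk k (M n) (\<phi> n). dist_k k x y \<le> 2^k * (1 / real m) + e"
      proof
        fix y assume y: "y \<in> QN"
        define c where "c = cell k m y"
        have cC': "c \<in> C'" unfolding c_def C'_def using y by blast
        define p where "p = quotient_sf k Nr psi (Gc c)"
        have cp: "cell k m p = c" using Gc[OF cC'] p_def by simp
        define x where "x = qt k n (\<lambda>x. Gc c (g n x))"
        have xin: "x \<in> Qk k (M n) (\<phi> n)" unfolding x_def Qk_eq
          using comp_valid[of k "Gc c" n] Gc[OF cC'] by blast
        have d1: "dist_k k x p \<le> e" using AB cC' unfolding x_def p_def by blast
        have d2: "dist_k k p y \<le> 2^k * (1 / real m)" by (rule close) (unfold cp, simp add: c_def)
        have "dist_k k x y \<le> 2^k * (1 / real m) + e"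
          using dist_k_tri[of k x y p] d1 d2 by linarith
        then show "\<exists>x\<in>Qk k (M n) (\<phi> n). dist_k k x y \<le> 2^k * (1 / real m) + e" using xin by blast
      qed
    qed
  qed
  then show ?thesis
  proof (rule eventually_mono)
    fix n assume "hausdist_k k (Qk k (M n) (\<phi> n)) QN \<le> 2^k * (1 / real m) + e"
    then show "hausdist_k k (Qk k (M n) (\<phi> n)) (Qk k Nr psi) \<le> \<delta>"
      using mb unfolding QN_def e_def by linarith
  qed
qed

end



context cpt
begin

definition hk :: "nat \<Rightarrow> nat \<Rightarrow> real" where
  "hk n j = hausdist_k (Suc j) (Qk (Suc j) (M n) (\<phi> n)) (Qk (Suc j) Nr psi)"

lemma hk_bounds: "0 \<le> hk n j \<and> hk n j \<le> (3/2)^(Suc j)"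
  unfolding hk_def
  by (rule haus_bound[OF Qk_ne Qk_ne]) (simp_all add: Q_bounds QN_bounds)

definition tt :: "nat \<Rightarrow> nat \<Rightarrow> real" where "tt n j = (1/2)^(Suc j) * hk n j"
definition w :: "nat \<Rightarrow> real" where "w j = (3/4)^(Suc j)"

lemma sf_eq: "sf_dist (M n) (\<phi> n) Nr psi = suminf (tt n)"
  unfolding sf_dist_def tt_def hk_def ..

lemma tt_nonneg: "0 \<le> tt n j"
  unfolding tt_def using hk_bounds[of n j] by simp

lemma tt_le_w: "tt n j \<le> w j"
proof -
  have "tt n j \<le> (1/2)^(Suc j) * (3/2)^(Suc j)"
    unfolding tt_def using hk_bounds[of n j] by (intro mult_left_mono) auto
  also have "\<dots> = (1/2 * (3/2))^(Suc j)" by (rule power_mult_distrib[symmetric])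
  also have "\<dots> = w j" by (simp add: w_def)
  finally show ?thesis .
qed

lemma summable_w: "summable w"
proof -
  have "summable (\<lambda>j. (3/4::real)^j)" by (rule summable_geometric) simp
  then show ?thesis unfolding w_def by (subst summable_Suc_iff)
qed

lemma summable_tt: "summable (tt n)"
  by (rule summable_comparison_test'[OF summable_w]) (use tt_nonneg tt_le_w in auto)

lemma sf_nonneg: "0 \<le> sf_dist (M n) (\<phi> n) Nr psi"
  unfolding sf_eq using summable_tt tt_nonneg by (simp add: suminf_nonneg)

lemma sf_ev:
  assumes d: "0 < \<delta>"
  shows "eventually (\<lambda>n. sf_dist (M n) (\<phi> n) Nr psi < \<delta>) U"
proof -
  define W where "W = suminf w"
  have W0: "0 \<le> W" unfolding W_def using summable_w by (intro suminf_nonneg) (auto simp: w_def)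
  obtain K where K: "(3/4::real)^K < \<delta> / (2 * (W + 1))"
    using real_arch_pow_inv[of "\<delta> / (2 * (W + 1))" "3/4"] d W0 by auto
  have tail: "(3/4::real)^K * W < \<delta> / 2"
  proof -
    have "(3/4::real)^K * W \<le> (3/4)^K * (W + 1)" by simp
    also have "\<dots> < \<delta> / (2 * (W + 1)) * (W + 1)" using K W0 by (intro mult_strict_right_mono) auto
    also have "\<dots> = \<delta> / 2" using W0 by (simp add: field_simps)
    finally show ?thesis .
  qed
  define \<eta> where "\<eta> = \<delta> / (4 * (real K + 1))"
  have \<eta>0: "0 < \<eta>" using d by (simp add: \<eta>_def)
  have ev: "eventually (\<lambda>n. \<forall>j\<in>{..<K}. hk n j \<le> \<eta>) U"
    by (rule eventually_ball_finite) (auto simp: hk_def intro!: haus_ev \<eta>0)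
  then show ?thesis
  proof (rule eventually_mono)
    fix n assume H: "\<forall>j\<in>{..<K}. hk n j \<le> \<eta>"
    have split: "suminf (tt n) = (\<Sum>j. tt n (j + K)) + (\<Sum>j<K. tt n j)"
      by (rule suminf_split_initial_segment[OF summable_tt])
    have s1: "(\<Sum>j. tt n (j + K)) \<le> (\<Sum>j. w (j + K))"
      by (rule suminf_le) (auto simp: tt_le_w summable_iff_shift summable_tt summable_w)
    have s2: "(\<Sum>j. w (j + K)) = (3/4)^K * W"
    proof -
      have "w (j + K) = (3/4)^K * w j" for j by (simp add: w_def power_add)
      then have "(\<Sum>j. w (j + K)) = (\<Sum>j. (3/4)^K * w j)" by simp
      also have "\<dots> = (3/4)^K * W" unfolding W_def by (rule suminf_mult[OF summable_w])
      finally show ?thesis .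
    qed
    have s3: "(\<Sum>j<K. tt n j) \<le> (\<Sum>j<K. \<eta>)"
    proof (rule sum_mono)
      fix j assume j: "j \<in> {..<K}"
      have p1: "(1/2::real)^Suc j \<le> 1" by (rule power_le_one) auto
      have "tt n j \<le> 1 * hk n j" unfolding tt_def using hk_bounds[of n j]
        by (intro mult_right_mono p1) auto
      moreover have "hk n j \<le> \<eta>" using H j by blast
      ultimately show "tt n j \<le> \<eta>" by simp
    qed
    have s4: "(\<Sum>j<K. \<eta>) < \<delta> / 4 + \<delta> / 4"
    proof -
      have "(\<Sum>j<K. \<eta>) = real K * \<eta>" by simp
      also have "\<dots> \<le> \<delta> / 4" unfolding \<eta>_def using d by (simp add: field_simps)
      finally show ?thesis using d by simp
    qed
    show "sf_dist (M n) (\<phi> n) Nr psi < \<delta>"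
      unfolding sf_eq split using s1 s2 s3 s4 tail by linarith
  qed
qed

end

theorem corollary3p11:
  fixes M :: "nat \<Rightarrow> 'a measure" and \<phi> :: "nat \<Rightarrow> 'a set \<Rightarrow> real"
  assumes "\<And>n. standard_borel (M n)"
    and "\<And>n. inc_norm_submod (M n) (\<phi> n)"
  shows "\<exists>(r :: nat \<Rightarrow> nat) (N :: real measure) (\<psi> :: real set \<Rightarrow> real).
           strict_mono r \<and> standard_borel N \<and> inc_norm_submod N \<psi> \<and>
           (\<lambda>n. sf_dist (M (r n)) (\<phi> (r n)) N \<psi>) \<longlonglongrightarrow> 0"
proof -
  obtain U :: "nat filter" where U: "U \<noteq> bot" "U \<le> sequentially"
    "\<And>P. eventually P U \<or> eventually (\<lambda>x. \<not> P x) U"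
    using ex_free_ultra by blast
  interpret cpt M \<phi> U
    by unfold_locales (use assms(2) U in auto)
  define a where "a n = sf_dist (M n) (\<phi> n) Nr psi" for n
  have ex: "\<exists>n. p < n \<and> a n < inverse (real (Suc j))" for j p
  proof -
    have "eventually (\<lambda>n. a n < inverse (real (Suc j))) U"
      unfolding a_def by (rule sf_ev) simp
    moreover have "eventually (\<lambda>n. p < n) U"
      using filter_leD[OF U(2) eventually_gt_at_top[of p]] .
    ultimately have "eventually (\<lambda>n. p < n \<and> a n < inverse (real (Suc j))) U"
      by (rule eventually_conj[rotated])
    then show ?thesis using eventually_happens'[OF U(1)] by blast
  qed
  have c1: "\<exists>g. \<forall>p. p < g p \<and> a (g p) < inverse (real (Suc j))" for j
    by (rule choice) (use ex in blast)
  then have "\<forall>j. \<exists>g. \<forall>p. p < g p \<and> a (g p) < inverse (real (Suc j))" by blast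
  from choice[OF this] obtain f where f0: "\<forall>j p. p < f j p \<and> a (f j p) < inverse (real (Suc j))"
    by blast
  then have f: "\<And>j p. p < f j p \<and> a (f j p) < inverse (real (Suc j))" by blast
  define r where "r = rec_nat (f 0 0) (\<lambda>j rj. f (Suc j) rj)"
  have r0: "r 0 = f 0 0" and rS: "r (Suc j) = f (Suc j) (r j)" for j
    unfolding r_def by simp_all
  have mono: "strict_mono r"
    unfolding strict_mono_Suc_iff using f rS by simp
  have rb: "a (r j) < inverse (real (Suc j))" for j
  proof (cases j)
    case 0
    then show ?thesis using f[of 0 0] by (simp only: r0)
  next
    case (Suc i)
    then show ?thesis using f[where j="Suc i" and p="r i"] by (simp only: rS)
  qed
  have lim: "(\<lambda>j. a (r j)) \<longlonglongrightarrow> 0"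
  proof (rule tendsto_sandwich[OF _ _ tendsto_const LIMSEQ_inverse_real_of_nat])
    show "eventually (\<lambda>j. 0 \<le> a (r j)) sequentially" unfolding a_def by (simp add: sf_nonneg)
    show "eventually (\<lambda>j. a (r j) \<le> inverse (real (Suc j))) sequentially"
      using rb by (simp add: less_imp_le)
  qed
  show ?thesis
    using mono Nr_sb psi_inc lim unfolding a_def by blast
qed

end
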